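(* Let $k \ge 1$, $N \ge 0$ and $0 \le \alpha \le N$ be integers and let $T = [t_1,\dots,t_k]$ with $t_1 \ge t_2 \ge \dots \ge t_k \ge 0$. Let $X = \{x \in \mathbb{Z}_{\ge 0}^k : \sum_{i=1}^k x_i \le N\}$ and let $f: X \to \mathbb{R}$ be the adversarial objective $f(x) = \min_{\delta \in \Delta_\alpha(x)} \sum_{i=1}^k t_i H(x_i - \delta_i)$. Then there exists $\tilde{x} \in X$ with $f(\tilde{x}) = \max_{x \in X} f(x)$ and $\tilde{x}_1 \ge \tilde{x}_2 \ge \dots \ge \tilde{x}_k$.
   Context: $H(n) = \min(1,n)$ for integers $n \ge 0$ (the indicator that a task with $n$ surviving agents is completed). For $x \in \mathbb{Z}_{\ge 0}^k$, the set of admissible attacks is $\Delta_\alpha(x) = \{\delta \in \mathbb{Z}_{\ge 0}^k : \sum_{i=1}^k \delta_i \le \alpha \text{ and } \delta_i \le x_i \text{ for all } i\}$; $\delta_i$ is the number of agents on task $i$ disabled by an adversary. Problem 2 (adversarial failure) is to maximize $f$ over $X$. *)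

theory Defs
  imports Complex_Main
begin

text \<open>Vectors in Z_{>=0}^k are represented as functions nat => nat, indices 0..<k,
  with value 0 outside {0..<k} (extensional).\<close>

definition H :: "nat \<Rightarrow> nat" where
  "H n = min 1 n"

definition feasX :: "nat \<Rightarrow> nat \<Rightarrow> (nat \<Rightarrow> nat) set" where
  "feasX k N = {x. (\<forall>i\<ge>k. x i = 0) \<and> (\<Sum>i<k. x i) \<le> N}"

definition attacks :: "nat \<Rightarrow> nat \<Rightarrow> (nat \<Rightarrow> nat) \<Rightarrow> (nat \<Rightarrow> nat) set" where
  "attacks k \<alpha> x = {\<delta>. (\<forall>i\<ge>k. \<delta> i = 0) \<and> (\<Sum>i<k. \<delta> i) \<le> \<alpha> \<and> (\<forall>i<k. \<delta> i \<le> x i)}"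

definition adv_obj :: "nat \<Rightarrow> nat \<Rightarrow> (nat \<Rightarrow> real) \<Rightarrow> (nat \<Rightarrow> nat) \<Rightarrow> real" where
  "adv_obj k \<alpha> t x = Min ((\<lambda>\<delta>. \<Sum>i<k. t i * real (H (x i - \<delta> i))) ` attacks k \<alpha> x)"

end

theory Submission
  imports Defs
begin

definition val :: "nat \<Rightarrow> (nat \<Rightarrow> real) \<Rightarrow> (nat \<Rightarrow> nat) \<Rightarrow> (nat \<Rightarrow> nat) \<Rightarrow> real" where
  "val k t x \<delta> = (\<Sum>i<k. t i * real (H (x i - \<delta> i)))"

lemma fin_funs: "finite {f::nat\<Rightarrow>nat. (\<forall>i\<ge>k. f i = 0) \<and> (\<forall>i<k. f i \<le> B)}"
proof (induction k)
  case 0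
  have "{f::nat\<Rightarrow>nat. (\<forall>i\<ge>0. f i = 0) \<and> (\<forall>i<0. f i \<le> B)} = {\<lambda>_. 0}" by auto
  then show ?case by simp
next
  case (Suc k)
  let ?S = "{f::nat\<Rightarrow>nat. (\<forall>i\<ge>k. f i = 0) \<and> (\<forall>i<k. f i \<le> B)}"
  have "{f::nat\<Rightarrow>nat. (\<forall>i\<ge>Suc k. f i = 0) \<and> (\<forall>i<Suc k. f i \<le> B)}
        \<subseteq> (\<lambda>(f,v). f(k:=v)) ` (?S \<times> {..B})"
  proof
    fix f assume f: "f \<in> {f::nat\<Rightarrow>nat. (\<forall>i\<ge>Suc k. f i = 0) \<and> (\<forall>i<Suc k. f i \<le> B)}"
    have "(f(k:=0), f k) \<in> ?S \<times> {..B}" using f by auto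
    moreover have "f = (\<lambda>(f,v). f(k:=v)) (f(k:=0), f k)" by auto
    ultimately show "f \<in> (\<lambda>(f,v). f(k:=v)) ` (?S \<times> {..B})" by blast
  qed
  moreover have "finite ((\<lambda>(f,v). f(k:=v)) ` (?S \<times> {..B}))" using Suc by auto
  ultimately show ?case by (rule finite_subset)
qed

lemma le_sum_nat: "i < k \<Longrightarrow> (g::nat\<Rightarrow>nat) i \<le> (\<Sum>l<k. g l)"
  by (rule member_le_sum) auto

lemma attacks_finite: "finite (attacks k \<alpha> x)"
proof -
  have "attacks k \<alpha> x \<subseteq> {f::nat\<Rightarrow>nat. (\<forall>i\<ge>k. f i = 0) \<and> (\<forall>i<k. f i \<le> \<alpha>)}"
    unfolding attacks_def using le_sum_nat order_trans by blast
  then show ?thesis using fin_funs finite_subset by blast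
qed

lemma attacks_ne: "(\<lambda>_. 0) \<in> attacks k \<alpha> x"
  unfolding attacks_def by auto

lemma feasX_finite: "finite (feasX k N)"
proof -
  have "feasX k N \<subseteq> {f::nat\<Rightarrow>nat. (\<forall>i\<ge>k. f i = 0) \<and> (\<forall>i<k. f i \<le> N)}"
    unfolding feasX_def using le_sum_nat order_trans by blast
  then show ?thesis using fin_funs finite_subset by blast
qed

lemma adv_val: "adv_obj k \<alpha> t x = Min (val k t x ` attacks k \<alpha> x)"
  unfolding adv_obj_def val_def by simp

lemma sum_split2:
  fixes i j k :: nat
  assumes "i \<noteq> j" "i < k" "j < k"
  shows "(\<Sum>l<k. h l) = h i + h j + (\<Sum>l\<in>{..<k}-{i,j}. h l)"
proof -
  have "(\<Sum>l<k. h l) = h i + (\<Sum>l\<in>{..<k}-{i}. h l)"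
    using assms by (subst sum.remove[of "{..<k}" i]) auto
  also have "(\<Sum>l\<in>{..<k}-{i}. h l) = h j + (\<Sum>l\<in>{..<k}-{i}-{j}. h l)"
    using assms by (subst sum.remove[of _ j]) auto
  also have "{..<k}-{i}-{j} = {..<k}-{i,j}" by auto
  finally show ?thesis by (simp add: add.assoc)
qed

lemma swap_better:
  assumes ij: "i < j" "j < k" and xij: "x i < x j" and tt: "t j \<le> t i" "t j \<ge> 0"
  shows "adv_obj k \<alpha> t x \<le> adv_obj k \<alpha> t (x(i:=x j, j:=x i))"
proof -
  let ?x' = "x(i:=x j, j:=x i)"
  have fin': "finite (val k t ?x' ` attacks k \<alpha> ?x')" using attacks_finite by simp
  have ne': "val k t ?x' ` attacks k \<alpha> ?x' \<noteq> {}" using attacks_ne by blast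
  obtain d' where d': "d' \<in> attacks k \<alpha> ?x'" "adv_obj k \<alpha> t ?x' = val k t ?x' d'"
    using Min_in[OF fin' ne'] adv_val by (metis imageE)
  have ineq: "i \<noteq> j" "i < k" using ij by auto
  have d'ext: "\<forall>l\<ge>k. d' l = 0" and d'sum: "(\<Sum>l<k. d' l) \<le> \<alpha>"
    and d'le: "\<forall>l<k. d' l \<le> ?x' l" using d'(1) unfolding attacks_def by auto
  have di: "d' i \<le> x j" and dj: "d' j \<le> x i" using d'le ij ineq by (auto split: if_splits)
  have rest: "\<And>g. (\<Sum>l\<in>{..<k}-{i,j}. g (?x' l) l) = (\<Sum>l\<in>{..<k}-{i,j}. g (x l) l)"
    by (rule sum.cong) auto
  have valx': "val k t ?x' d' = t i * real (H (x j - d' i)) + t j * real (H (x i - d' j))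
     + (\<Sum>l\<in>{..<k}-{i,j}. t l * real (H (x l - d' l)))"
  proof -
    have "val k t ?x' d' = (\<Sum>l<k. t l * real (H (?x' l - d' l)))" unfolding val_def ..
    also have "\<dots> = t i * real (H (?x' i - d' i)) + t j * real (H (?x' j - d' j))
     + (\<Sum>l\<in>{..<k}-{i,j}. t l * real (H (?x' l - d' l)))"
      by (rule sum_split2[OF ineq ij(2)])
    finally show ?thesis using ineq rest[of "\<lambda>a l. t l * real (H (a - d' l))"] by simp
  qed
  have Hle: "\<And>n. H n \<le> 1" unfolding H_def by simp
  obtain d where d: "d \<in> attacks k \<alpha> x" "val k t x d \<le> val k t ?x' d'"
  proof (cases "H (x i - d' j) \<le> H (x j - d' i)")
    case True
    let ?d = "d'(i:=d' j, j:=d' i)"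
    have s: "(\<Sum>l<k. ?d l) = (\<Sum>l<k. d' l)"
      using sum_split2[OF ineq ij(2), of ?d] sum_split2[OF ineq ij(2), of d']
        ineq sum.cong[of "{..<k}-{i,j}" "{..<k}-{i,j}" ?d d'] by auto
    have "?d \<in> attacks k \<alpha> x" unfolding attacks_def using d'ext d'sum d'le s di dj ij
      by (auto split: if_splits)
    moreover have "val k t x ?d = t i * real (H (x i - d' j)) + t j * real (H (x j - d' i))
       + (\<Sum>l\<in>{..<k}-{i,j}. t l * real (H (x l - d' l)))"
    proof -
      have dd: "?d i = d' j" "?d j = d' i" using ineq by auto
      have "val k t x ?d = (\<Sum>l<k. t l * real (H (x l - ?d l)))" unfolding val_def ..
      also have "\<dots> = t i * real (H (x i - ?d i)) + t j * real (H (x j - ?d j))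
       + (\<Sum>l\<in>{..<k}-{i,j}. t l * real (H (x l - ?d l)))"
        by (rule sum_split2[OF ineq ij(2)])
      also have "(\<Sum>l\<in>{..<k}-{i,j}. t l * real (H (x l - ?d l))) = (\<Sum>l\<in>{..<k}-{i,j}. t l * real (H (x l - d' l)))"
        by (rule sum.cong) auto
      finally show ?thesis using ineq by (simp only: dd)
    qed
    moreover have "t i * real (H (x i - d' j)) + t j * real (H (x j - d' i))
        \<le> t i * real (H (x j - d' i)) + t j * real (H (x i - d' j))"
    proof -
      have "(t i - t j) * (real (H (x i - d' j)) - real (H (x j - d' i))) \<le> 0"
        using True tt by (intro mult_nonneg_nonpos) auto
      then show ?thesis by (simp add: algebra_simps)
    qed
    ultimately show ?thesis using valx' that by fastforce
  next
    case False
    then have a0: "H (x j - d' i) = 0" and b1: "H (x i - d' j) = 1"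
      using Hle by (metis le_antisym nat_le_linear less_one not_le)+
    have dix: "d' i = x j" using a0 di unfolding H_def by auto
    let ?d = "d'(i:=x i)"
    have s: "(\<Sum>l<k. ?d l) \<le> (\<Sum>l<k. d' l)"
      using dix xij by (intro sum_mono) auto
    have "?d \<in> attacks k \<alpha> x" unfolding attacks_def using d'ext d'sum d'le s di dj ij xij
      by (auto split: if_splits)
    moreover have "val k t x ?d = t i * real (H (x i - x i)) + t j * real (H (x j - d' j))
       + (\<Sum>l\<in>{..<k}-{i,j}. t l * real (H (x l - d' l)))"
    proof -
      have dd: "?d i = x i" "?d j = d' j" using ineq by auto
      have "val k t x ?d = (\<Sum>l<k. t l * real (H (x l - ?d l)))" unfolding val_def ..
      also have "\<dots> = t i * real (H (x i - ?d i)) + t j * real (H (x j - ?d j))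
       + (\<Sum>l\<in>{..<k}-{i,j}. t l * real (H (x l - ?d l)))"
        by (rule sum_split2[OF ineq ij(2)])
      also have "(\<Sum>l\<in>{..<k}-{i,j}. t l * real (H (x l - ?d l))) = (\<Sum>l\<in>{..<k}-{i,j}. t l * real (H (x l - d' l)))"
        by (rule sum.cong) auto
      finally show ?thesis using ineq by (simp only: dd)
    qed
    moreover have "t j * real (H (x j - d' j)) \<le> t j"
      using Hle[of "x j - d' j"] tt by (simp add: mult_left_le)
    ultimately show ?thesis using valx' that a0 b1 by (fastforce simp: H_def)
  qed
  have "adv_obj k \<alpha> t x \<le> val k t x d"
    unfolding adv_val using attacks_finite d(1) by (intro Min_le) auto
  then show ?thesis using d(2) d'(2) by simp
qed

theorem proposition1:
  fixes k N \<alpha> :: nat and t :: "nat \<Rightarrow> real"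
  assumes "k \<ge> 1" and "\<alpha> \<le> N"
    and "\<And>i j. i \<le> j \<Longrightarrow> j < k \<Longrightarrow> t j \<le> t i"
    and "\<And>i. i < k \<Longrightarrow> t i \<ge> 0"
  shows "\<exists>xt \<in> feasX k N.
           adv_obj k \<alpha> t xt = Max (adv_obj k \<alpha> t ` feasX k N) \<and>
           (\<forall>i j. i \<le> j \<longrightarrow> j < k \<longrightarrow> xt j \<le> xt i)"
proof -
  let ?f = "adv_obj k \<alpha> t"
  let ?M = "{x \<in> feasX k N. ?f x = Max (?f ` feasX k N)}"
  let ?mu = "\<lambda>x. (\<Sum>l<k. l * x l)"
  have z: "(\<lambda>_. 0) \<in> feasX k N" unfolding feasX_def by auto
  have "Max (?f ` feasX k N) \<in> ?f ` feasX k N"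
    using feasX_finite z by (intro Max_in) auto
  then have Mne: "?M \<noteq> {}" by auto
  have Mfin: "finite ?M" using feasX_finite by simp
  have "Min (?mu ` ?M) \<in> ?mu ` ?M" using Mne Mfin by (intro Min_in) auto
  then obtain x where xM: "x \<in> ?M" and xmin: "?mu x = Min (?mu ` ?M)" by auto
  have minle: "\<And>y. y \<in> ?M \<Longrightarrow> ?mu x \<le> ?mu y" using xmin Mfin by simp
  show ?thesis
  proof (rule bexI[of _ x], intro conjI allI impI)
    show "x \<in> feasX k N" using xM by simp
    show "?f x = Max (?f ` feasX k N)" using xM by simp
    fix i j assume ij: "i \<le> j" "j < k"
    show "x j \<le> x i"
    proof (rule ccontr)
      assume "\<not> x j \<le> x i"
      then have xl: "x i < x j" by simp
      then have ij': "i < j" using ij le_neq_implies_less by blast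
      have ineq: "i \<noteq> j" "i < k" using ij' ij by auto
      let ?x' = "x(i:=x j, j:=x i)"
      have xf: "x \<in> feasX k N" using xM by simp
      have rest: "\<And>g. (\<Sum>l\<in>{..<k}-{i,j}. g (?x' l) l) = (\<Sum>l\<in>{..<k}-{i,j}. g (x l) l)"
        by (rule sum.cong) auto
      have s: "(\<Sum>l<k. ?x' l) = (\<Sum>l<k. x l)"
        using sum_split2[OF ineq ij(2), of ?x'] sum_split2[OF ineq ij(2), of x]
          ineq rest[of "\<lambda>a l. a"] by simp
      have x'f: "?x' \<in> feasX k N" using xf s ij unfolding feasX_def by auto
      have "?f x \<le> ?f ?x'"
        using swap_better[OF ij' ij(2) xl] assms(3)[OF ij] assms(4)[OF ij(2)] by simp
      moreover have "?f ?x' \<le> Max (?f ` feasX k N)"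
        using feasX_finite x'f by (intro Max_ge) auto
      ultimately have "?x' \<in> ?M" using xM x'f by auto
      then have "?mu x \<le> ?mu ?x'" by (rule minle)
      moreover have "?mu ?x' < ?mu x"
      proof -
        have "?mu ?x' = i * x j + j * x i + (\<Sum>l\<in>{..<k}-{i,j}. l * x l)"
          using sum_split2[OF ineq ij(2), of "\<lambda>l. l * ?x' l"] ineq
            rest[of "\<lambda>a l. l * a"] by simp
        moreover have "?mu x = i * x i + j * x j + (\<Sum>l\<in>{..<k}-{i,j}. l * x l)"
          using sum_split2[OF ineq ij(2), of "\<lambda>l. l * x l"] by simp
        moreover have "i * x j + j * x i < i * x i + j * x j"
        proof -
          have "(j - i) * x i < (j - i) * x j" using ij' xl by simp
          then show ?thesis using ij' by (simp add: diff_mult_distrib)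
        qed
        ultimately show ?thesis by simp
      qed
      ultimately show False by simp
    qed
  qed
qed

end
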